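(* Let $(X_0,X_1)$ be an optimal interpolation pair and $0<\theta<1$, with $\Omega_\theta$ the canonical differential. If $g$ is an operator on $X_0+X_1$ which restricts to a contraction of $X_0$ and of $X_1$ and restricts to an isometric embedding of $X_\theta$, then $g\Omega_\theta x=\Omega_\theta gx$ for all $x\in X_\theta$. In particular $\Omega_\theta$ is $G$-equivariant for the group $G$ of operators acting as surjective isometries on both $X_0$ and $X_1$.
   Context: Regular interpolation pair, strip $\mathbb S=\{0<\mathrm{Re}z<1\}$, Calderón space $\mathscr C$ (bounded continuous $F:\overline{\mathbb S}\to X_0+X_1$ analytic inside, with $F(k+i\cdot)$ bounded continuous into $X_k$, norm $\sup_{k,t}\|F(k+it)\|_{X_k}$), and $X_\theta=\{F(\theta)\}$ with the quotient norm, as usual. The pair is optimal if for every $0<\theta<1$ and every $x\in X_\theta$ there is a unique minimal function $B_\theta x$ in the Calderón space (in the variant where boundary continuity is replaced by essential boundedness) with $(B_\theta x)(\theta)=x$ and $\|B_\theta x\|=\|x\|_\theta$. The canonical differential is then $\Omega_\theta x=(B_\theta x)'(\theta)\in X_0+X_1$. *)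

theory Defs
  imports "HOL-Analysis.Analysis"
begin

text \<open>Complex structure on an ambient real normed space: J is multiplication by i.\<close>

definition cscale :: "('a::real_vector \<Rightarrow> 'a) \<Rightarrow> complex \<Rightarrow> 'a \<Rightarrow> 'a" where
  "cscale J c x = Re c *\<^sub>R x + Im c *\<^sub>R J x"

definition complex_structure :: "('a::real_vector \<Rightarrow> 'a) \<Rightarrow> bool" where
  "complex_structure J \<longleftrightarrow> linear J \<and> (\<forall>x. J (J x) = - x)"

definition complex_subspace :: "('a::real_vector \<Rightarrow> 'a) \<Rightarrow> 'a set \<Rightarrow> bool" where
  "complex_subspace J X \<longleftrightarrow> 0 \<in> X \<and> (\<forall>x\<in>X. \<forall>y\<in>X. x + y \<in> X)
     \<and> (\<forall>c. \<forall>x\<in>X. cscale J c x \<in> X)"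

definition complex_norm_on :: "('a::real_vector \<Rightarrow> 'a) \<Rightarrow> 'a set \<Rightarrow> ('a \<Rightarrow> real) \<Rightarrow> bool" where
  "complex_norm_on J X n \<longleftrightarrow>
     (\<forall>x\<in>X. 0 \<le> n x) \<and> (\<forall>x\<in>X. n x = 0 \<longleftrightarrow> x = 0)
     \<and> (\<forall>x\<in>X. \<forall>y\<in>X. n (x + y) \<le> n x + n y)
     \<and> (\<forall>c. \<forall>x\<in>X. n (cscale J c x) = cmod c * n x)"

definition complete_wrt :: "'a::real_vector set \<Rightarrow> ('a \<Rightarrow> real) \<Rightarrow> bool" where
  "complete_wrt X n \<longleftrightarrow>
     (\<forall>f::nat \<Rightarrow> 'a. (\<forall>k. f k \<in> X) \<and> (\<forall>e>0. \<exists>N. \<forall>p\<ge>N. \<forall>q\<ge>N. n (f p - f q) < e)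
        \<longrightarrow> (\<exists>l\<in>X. \<forall>e>0. \<exists>N. \<forall>p\<ge>N. n (f p - l) < e))"

definition dense_wrt :: "'a::real_vector set \<Rightarrow> 'a set \<Rightarrow> ('a \<Rightarrow> real) \<Rightarrow> bool" where
  "dense_wrt D X n \<longleftrightarrow> (\<forall>x\<in>X. \<forall>e>0. \<exists>d\<in>D. n (x - d) < e)"

text \<open>A (compatible, complex Banach) interpolation pair, modelled inside the ambient space
  X0 + X1 (the type 'a), whose norm is the sum norm.  Regularity: X0 \<inter> X1 dense in both.\<close>

definition regular_interpolation_pair ::
  "('a::real_normed_vector \<Rightarrow> 'a) \<Rightarrow> 'a set \<Rightarrow> ('a \<Rightarrow> real) \<Rightarrow> 'a set \<Rightarrow> ('a \<Rightarrow> real) \<Rightarrow> bool" where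
  "regular_interpolation_pair J X0 n0 X1 n1 \<longleftrightarrow>
     complex_structure J
     \<and> complex_subspace J X0 \<and> complex_subspace J X1
     \<and> complex_norm_on J X0 n0 \<and> complex_norm_on J X1 n1
     \<and> complete_wrt X0 n0 \<and> complete_wrt X1 n1
     \<and> (\<forall>x. \<exists>a\<in>X0. \<exists>b\<in>X1. a + b = x)
     \<and> (\<forall>x. norm x = Inf {n0 a + n1 b | a b. a \<in> X0 \<and> b \<in> X1 \<and> a + b = x})
     \<and> dense_wrt (X0 \<inter> X1) X0 n0 \<and> dense_wrt (X0 \<inter> X1) X1 n1"

definition strip :: "complex set" where
  "strip = {z. 0 < Re z \<and> Re z < 1}"

definition cstrip :: "complex set" where
  "cstrip = {z. 0 \<le> Re z \<and> Re z \<le> 1}"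

definition has_cderiv :: "('a::real_normed_vector \<Rightarrow> 'a) \<Rightarrow> (complex \<Rightarrow> 'a) \<Rightarrow> 'a \<Rightarrow> complex \<Rightarrow> bool" where
  "has_cderiv J F v z \<longleftrightarrow> (F has_derivative (\<lambda>h. cscale J h v)) (at z)"

definition canalytic_on :: "('a::real_normed_vector \<Rightarrow> 'a) \<Rightarrow> (complex \<Rightarrow> 'a) \<Rightarrow> complex set \<Rightarrow> bool" where
  "canalytic_on J F S \<longleftrightarrow> (\<forall>z\<in>S. \<exists>v. has_cderiv J F v z)"

text \<open>Common part of both Calder\'on spaces. Functions are taken to vanish off the closed strip
  so that they are determined by their values on the closed strip.\<close>

definition calderon_base :: "('a::real_normed_vector \<Rightarrow> 'a) \<Rightarrow> (complex \<Rightarrow> 'a) \<Rightarrow> bool" where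
  "calderon_base J F \<longleftrightarrow> bounded (F ` cstrip) \<and> continuous_on cstrip F
     \<and> canalytic_on J F strip \<and> (\<forall>z. z \<notin> cstrip \<longrightarrow> F z = 0)"

definition bdry_cont_bdd :: "'a::real_normed_vector set \<Rightarrow> ('a \<Rightarrow> real) \<Rightarrow> (real \<Rightarrow> 'a) \<Rightarrow> bool" where
  "bdry_cont_bdd X n f \<longleftrightarrow> (\<forall>t. f t \<in> X) \<and> (\<exists>M. \<forall>t. n (f t) \<le> M)
     \<and> (\<forall>t. \<forall>e>0. \<exists>d>0. \<forall>s. \<bar>s - t\<bar> < d \<longrightarrow> n (f s - f t) < e)"

definition calderon ::
  "('a::real_normed_vector \<Rightarrow> 'a) \<Rightarrow> 'a set \<Rightarrow> ('a \<Rightarrow> real) \<Rightarrow> 'a set \<Rightarrow> ('a \<Rightarrow> real) \<Rightarrow> (complex \<Rightarrow> 'a) set" where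
  "calderon J X0 n0 X1 n1 = {F. calderon_base J F
     \<and> bdry_cont_bdd X0 n0 (\<lambda>t. F (Complex 0 t)) \<and> bdry_cont_bdd X1 n1 (\<lambda>t. F (Complex 1 t))}"

definition calderon_norm :: "('a \<Rightarrow> real) \<Rightarrow> ('a \<Rightarrow> real) \<Rightarrow> (complex \<Rightarrow> 'a) \<Rightarrow> real" where
  "calderon_norm n0 n1 F = max (SUP t. n0 (F (Complex 0 t))) (SUP t. n1 (F (Complex 1 t)))"

definition bdry_ess_bdd :: "'a set \<Rightarrow> ('a \<Rightarrow> real) \<Rightarrow> (real \<Rightarrow> 'a) \<Rightarrow> real \<Rightarrow> bool" where
  "bdry_ess_bdd X n f M \<longleftrightarrow> (AE t in lborel. f t \<in> X \<and> n (f t) \<le> M)"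

definition ess_bdry_norm :: "'a set \<Rightarrow> ('a \<Rightarrow> real) \<Rightarrow> (real \<Rightarrow> 'a) \<Rightarrow> real" where
  "ess_bdry_norm X n f = Inf {M. bdry_ess_bdd X n f M}"

definition calderon_ess ::
  "('a::real_normed_vector \<Rightarrow> 'a) \<Rightarrow> 'a set \<Rightarrow> ('a \<Rightarrow> real) \<Rightarrow> 'a set \<Rightarrow> ('a \<Rightarrow> real) \<Rightarrow> (complex \<Rightarrow> 'a) set" where
  "calderon_ess J X0 n0 X1 n1 = {F. calderon_base J F
     \<and> (\<exists>M. bdry_ess_bdd X0 n0 (\<lambda>t. F (Complex 0 t)) M)
     \<and> (\<exists>M. bdry_ess_bdd X1 n1 (\<lambda>t. F (Complex 1 t)) M)}"

definition calderon_ess_norm :: "'a set \<Rightarrow> ('a \<Rightarrow> real) \<Rightarrow> 'a set \<Rightarrow> ('a \<Rightarrow> real) \<Rightarrow> (complex \<Rightarrow> 'a) \<Rightarrow> real" where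
  "calderon_ess_norm X0 n0 X1 n1 F =
     max (ess_bdry_norm X0 n0 (\<lambda>t. F (Complex 0 t))) (ess_bdry_norm X1 n1 (\<lambda>t. F (Complex 1 t)))"

definition interp_space ::
  "('a::real_normed_vector \<Rightarrow> 'a) \<Rightarrow> 'a set \<Rightarrow> ('a \<Rightarrow> real) \<Rightarrow> 'a set \<Rightarrow> ('a \<Rightarrow> real) \<Rightarrow> real \<Rightarrow> 'a set" where
  "interp_space J X0 n0 X1 n1 \<theta> = {F (complex_of_real \<theta>) | F. F \<in> calderon J X0 n0 X1 n1}"

definition interp_norm ::
  "('a::real_normed_vector \<Rightarrow> 'a) \<Rightarrow> 'a set \<Rightarrow> ('a \<Rightarrow> real) \<Rightarrow> 'a set \<Rightarrow> ('a \<Rightarrow> real) \<Rightarrow> real \<Rightarrow> 'a \<Rightarrow> real" where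
  "interp_norm J X0 n0 X1 n1 \<theta> x =
     Inf {calderon_norm n0 n1 F | F. F \<in> calderon J X0 n0 X1 n1 \<and> F (complex_of_real \<theta>) = x}"

definition is_minimal_fn ::
  "('a::real_normed_vector \<Rightarrow> 'a) \<Rightarrow> 'a set \<Rightarrow> ('a \<Rightarrow> real) \<Rightarrow> 'a set \<Rightarrow> ('a \<Rightarrow> real) \<Rightarrow> real \<Rightarrow> 'a \<Rightarrow> (complex \<Rightarrow> 'a) \<Rightarrow> bool" where
  "is_minimal_fn J X0 n0 X1 n1 \<theta> x F \<longleftrightarrow>
     F \<in> calderon_ess J X0 n0 X1 n1 \<and> F (complex_of_real \<theta>) = x
     \<and> calderon_ess_norm X0 n0 X1 n1 F = interp_norm J X0 n0 X1 n1 \<theta> x"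

definition optimal_pair ::
  "('a::real_normed_vector \<Rightarrow> 'a) \<Rightarrow> 'a set \<Rightarrow> ('a \<Rightarrow> real) \<Rightarrow> 'a set \<Rightarrow> ('a \<Rightarrow> real) \<Rightarrow> bool" where
  "optimal_pair J X0 n0 X1 n1 \<longleftrightarrow> regular_interpolation_pair J X0 n0 X1 n1
     \<and> (\<forall>\<theta>. 0 < \<theta> \<and> \<theta> < 1 \<longrightarrow>
          (\<forall>x\<in>interp_space J X0 n0 X1 n1 \<theta>. \<exists>!F. is_minimal_fn J X0 n0 X1 n1 \<theta> x F))"

definition minimal_fn ::
  "('a::real_normed_vector \<Rightarrow> 'a) \<Rightarrow> 'a set \<Rightarrow> ('a \<Rightarrow> real) \<Rightarrow> 'a set \<Rightarrow> ('a \<Rightarrow> real) \<Rightarrow> real \<Rightarrow> 'a \<Rightarrow> (complex \<Rightarrow> 'a)" where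
  "minimal_fn J X0 n0 X1 n1 \<theta> x = (THE F. is_minimal_fn J X0 n0 X1 n1 \<theta> x F)"

definition canonical_differential ::
  "('a::real_normed_vector \<Rightarrow> 'a) \<Rightarrow> 'a set \<Rightarrow> ('a \<Rightarrow> real) \<Rightarrow> 'a set \<Rightarrow> ('a \<Rightarrow> real) \<Rightarrow> real \<Rightarrow> 'a \<Rightarrow> 'a" where
  "canonical_differential J X0 n0 X1 n1 \<theta> x =
     (THE v. has_cderiv J (minimal_fn J X0 n0 X1 n1 \<theta> x) v (complex_of_real \<theta>))"

definition operator_on :: "('a::real_normed_vector \<Rightarrow> 'a) \<Rightarrow> ('a \<Rightarrow> 'a) \<Rightarrow> bool" where
  "operator_on J g \<longleftrightarrow> bounded_linear g \<and> (\<forall>x. g (J x) = J (g x))"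

end

theory Submission
  imports Defs
begin


lemma inf_bound_aux:
  fixes S :: "real set"
  assumes "S \<noteq> {}" "\<And>M. M \<in> S \<Longrightarrow> a \<le> k * M + b" "0 \<le> k"
  shows "a \<le> k * Inf S + b"
proof (cases "k = 0")
  case True
  then show ?thesis using assms by auto
next
  case False
  hence kp: "k > 0" using assms by auto
  have "(a - b) / k \<le> Inf S"
    apply (rule cInf_greatest[OF assms(1)])
    using assms(2) kp by (simp add: divide_le_eq mult.commute algebra_simps)
  thus ?thesis using kp by (simp add: divide_le_eq algebra_simps)
qed

lemma abstract_unique:
  fixes C :: "('b \<Rightarrow> 'a::real_vector) set" and N :: "('b \<Rightarrow> 'a) \<Rightarrow> real"
  assumes lin: "\<And>F G c. F \<in> C \<Longrightarrow> G \<in> C \<Longrightarrow> (\<lambda>z. F z + c *\<^sub>R G z) \<in> C"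
    and sc: "\<And>F c. F \<in> C \<Longrightarrow> (\<lambda>z. c *\<^sub>R F z) \<in> C"
    and add: "\<And>F G. F \<in> C \<Longrightarrow> G \<in> C \<Longrightarrow> N (\<lambda>z. F z + G z) \<le> N F + N G"
    and hom: "\<And>F c. F \<in> C \<Longrightarrow> N (\<lambda>z. c *\<^sub>R F z) \<le> \<bar>c\<bar> * N F"
    and nn: "\<And>F. F \<in> C \<Longrightarrow> 0 \<le> N F"
    and H: "H \<in> C" and P: "P \<in> C" and val: "H w = y" "P w = y"
    and NP: "N P \<le> N H"
    and uniq: "\<And>Q. Q \<in> C \<Longrightarrow> Q w = y \<Longrightarrow> N Q = N H \<Longrightarrow> Q = H"
  shows "P = H"
proof (cases "N P = N H")
  case True thus ?thesis using uniq P val by auto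
next
  case False
  hence lt: "N P < N H" using NP by auto
  define D where "D = (\<lambda>z. P z + (-1) *\<^sub>R H z)"
  have D: "D \<in> C" unfolding D_def by (rule lin[OF P H])
  define Q where "Q = (\<lambda>t::real. (\<lambda>z. H z + t *\<^sub>R D z))"
  have QC: "Q t \<in> C" for t unfolding Q_def by (rule lin[OF H D])
  have Qw: "Q t w = y" for t unfolding Q_def D_def using val by simp
  have Q0: "Q 0 = H" unfolding Q_def by simp
  have Q1: "Q 1 = P" unfolding Q_def D_def by (rule ext) simp
  have step: "N (Q t) \<le> N (Q s) + \<bar>t - s\<bar> * N D" for t s
  proof -
    have "Q t = (\<lambda>z. Q s z + ((t - s) *\<^sub>R D z))"
      unfolding Q_def by (rule ext) (simp add: algebra_simps)
    hence "N (Q t) \<le> N (Q s) + N (\<lambda>z. (t - s) *\<^sub>R D z)"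
      using add[OF QC sc[OF D]] by simp
    also have "\<dots> \<le> N (Q s) + \<bar>t - s\<bar> * N D" using hom[OF D] by simp
    finally show ?thesis .
  qed
  have ND: "N H - N P \<le> N D" using step[of 0 1] Q0 Q1 by simp
  hence NDp: "N D > 0" using lt by simp
  define T where "T = (2 * N H + 1) / N D + 1"
  have T1: "T \<ge> 1" unfolding T_def using NDp nn[OF H] by simp
  have TND: "T * N D = 2 * N H + 1 + N D" unfolding T_def using NDp by (simp add: field_simps)
  have "N (\<lambda>z. T *\<^sub>R D z) \<le> N (Q T) + N H"
  proof -
    have e: "(\<lambda>z. T *\<^sub>R D z) = (\<lambda>z. Q T z + (-1) *\<^sub>R H z)" unfolding Q_def by (rule ext) simp
    have "N (\<lambda>z. Q T z + (-1) *\<^sub>R H z) \<le> N (Q T) + N (\<lambda>z. (-1) *\<^sub>R H z)"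
      by (rule add[OF QC sc[OF H]])
    also have "\<dots> \<le> N (Q T) + N H" using hom[OF H, of "-1"] by simp
    finally show ?thesis using e by simp
  qed
  moreover have "N D \<le> (1/T) * N (\<lambda>z. T *\<^sub>R D z)"
  proof -
    have "D = (\<lambda>z. (1/T) *\<^sub>R (T *\<^sub>R D z))" using T1 by (intro ext) simp
    hence "N D = N (\<lambda>z. (1/T) *\<^sub>R (\<lambda>z. T *\<^sub>R D z) z)" by simp
    also have "\<dots> \<le> \<bar>1/T\<bar> * N (\<lambda>z. T *\<^sub>R D z)" by (rule hom[OF sc[OF D]])
    finally show ?thesis using T1 by simp
  qed
  ultimately have "T * N D \<le> N (Q T) + N H" using T1
    by (simp add: field_simps)
  hence QT: "N H \<le> N (Q T)" using TND nn[OF H] NDp by simp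
  have cont: "continuous_on {1..T} (\<lambda>t. N (Q t))"
  proof (rule lipschitz_on_continuous_on)
    show "(N D)-lipschitz_on {1..T} (\<lambda>t. N (Q t))"
      unfolding lipschitz_on_def dist_real_def
      using step NDp by (auto simp: abs_le_iff abs_minus_commute algebra_simps)
        (smt (verit, ccfv_SIG) abs_minus_commute mult.commute step)+
  qed
  obtain s where s: "1 \<le> s" "s \<le> T" "N (Q s) = N H"
    using IVT'[of "\<lambda>t. N (Q t)" 1 "N H" T, OF _ QT T1 cont] Q1 lt by auto
  have "Q s = H" using uniq[OF QC Qw s(3)] .
  hence "\<forall>z. s *\<^sub>R D z = 0" unfolding Q_def by (metis add_cancel_left_right)
  hence "\<forall>z. D z = 0" using s(1) by simp
  hence "P = H" unfolding D_def by (intro ext) (simp add: algebra_simps)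
  thus ?thesis .
qed



lemma cscale_real: "cscale J (complex_of_real c) x = c *\<^sub>R x"
  by (simp add: cscale_def)

lemma csub_scale: "complex_subspace J X \<Longrightarrow> x \<in> X \<Longrightarrow> c *\<^sub>R x \<in> X"
proof -
  assume h: "complex_subspace J X" "x \<in> X"
  have a: "\<forall>c. \<forall>x\<in>X. cscale J c x \<in> X" using h(1) unfolding complex_subspace_def by (elim conjE)
  have "cscale J (complex_of_real c) x \<in> X" using a h(2) by blast
  thus ?thesis unfolding cscale_real .
qed

lemma csub_add: "complex_subspace J X \<Longrightarrow> x \<in> X \<Longrightarrow> y \<in> X \<Longrightarrow> x + y \<in> X"
proof -
  assume h: "complex_subspace J X" "x \<in> X" "y \<in> X"
  have a: "\<forall>x\<in>X. \<forall>y\<in>X. x + y \<in> X" using h(1) unfolding complex_subspace_def by (elim conjE)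
  thus ?thesis using h(2,3) by blast
qed

lemma csub_0: "complex_subspace J X \<Longrightarrow> 0 \<in> X"
  unfolding complex_subspace_def by (elim conjE)

lemma csub_diff: "complex_subspace J X \<Longrightarrow> x \<in> X \<Longrightarrow> y \<in> X \<Longrightarrow> x - y \<in> X"
proof -
  assume h: "complex_subspace J X" "x \<in> X" "y \<in> X"
  have "(-1) *\<^sub>R y \<in> X" by (rule csub_scale[OF h(1) h(3)])
  from csub_add[OF h(1) h(2) this] show ?thesis by simp
qed

lemma cn_scale: "complex_norm_on J X n \<Longrightarrow> x \<in> X \<Longrightarrow> n (c *\<^sub>R x) = \<bar>c\<bar> * n x"
proof -
  assume h: "complex_norm_on J X n" "x \<in> X"
  have a: "\<forall>c. \<forall>x\<in>X. n (cscale J c x) = cmod c * n x" using h(1) unfolding complex_norm_on_def by (elim conjE)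
  have "n (cscale J (complex_of_real c) x) = cmod (complex_of_real c) * n x" using a h(2) by blast
  thus ?thesis unfolding cscale_real norm_of_real .
qed

lemma cn_nn: "complex_norm_on J X n \<Longrightarrow> x \<in> X \<Longrightarrow> 0 \<le> n x"
proof -
  assume h: "complex_norm_on J X n" "x \<in> X"
  have a: "\<forall>x\<in>X. 0 \<le> n x" using h(1) unfolding complex_norm_on_def by (elim conjE)
  thus ?thesis using h(2) by blast
qed

lemma cn_0: "complex_norm_on J X n \<Longrightarrow> complex_subspace J X \<Longrightarrow> n 0 = 0"
proof -
  assume h: "complex_norm_on J X n" "complex_subspace J X"
  have a: "\<forall>x\<in>X. n x = 0 \<longleftrightarrow> x = 0" using h(1) unfolding complex_norm_on_def by (elim conjE)
  thus ?thesis using csub_0[OF h(2)] by blast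
qed

lemma cn_add: "complex_norm_on J X n \<Longrightarrow> x \<in> X \<Longrightarrow> y \<in> X \<Longrightarrow> n (x + y) \<le> n x + n y"
proof -
  assume h: "complex_norm_on J X n" "x \<in> X" "y \<in> X"
  have "\<forall>x\<in>X. \<forall>y\<in>X. n (x + y) \<le> n x + n y" using h(1) unfolding complex_norm_on_def by (elim conjE)
  thus ?thesis using h by blast
qed

lemma cscale_add: "linear J \<Longrightarrow> cscale J h (a + b) = cscale J h a + cscale J h b"
  unfolding cscale_def by (simp add: linear_add[of J a b] scaleR_add_right)

lemma op_cscale: "operator_on J g \<Longrightarrow> g (cscale J h v) = cscale J h (g v)"
proof -
  assume g: "operator_on J g"
  hence l: "linear g" and c: "g (J v) = J (g v)" unfolding operator_on_def by (auto simp: bounded_linear.linear)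
  show ?thesis unfolding cscale_def using c by (simp add: linear_add[OF l] linear_scale[OF l])
qed

lemma scale_operator: "complex_structure J \<Longrightarrow> operator_on J (\<lambda>x. c *\<^sub>R x)"
  unfolding operator_on_def complex_structure_def
  by (simp add: bounded_linear_scaleR_right linear_scale)

lemma cb_add:
  assumes J: "complex_structure J" and F: "calderon_base J F" and G: "calderon_base J G"
  shows "calderon_base J (\<lambda>z. F z + G z)"
proof -
  have lJ: "linear J" using J unfolding complex_structure_def by blast
  obtain B1 where B1: "\<forall>z\<in>cstrip. norm (F z) \<le> B1" using F unfolding calderon_base_def bounded_iff by auto
  obtain B2 where B2: "\<forall>z\<in>cstrip. norm (G z) \<le> B2" using G unfolding calderon_base_def bounded_iff by auto
  have "bounded ((\<lambda>z. F z + G z) ` cstrip)" unfolding bounded_iff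
    using B1 B2 by (intro exI[of _ "B1 + B2"]) (auto intro!: norm_triangle_le add_mono)
  moreover have "continuous_on cstrip (\<lambda>z. F z + G z)"
    using F G unfolding calderon_base_def by (auto intro: continuous_on_add)
  moreover have "canalytic_on J (\<lambda>z. F z + G z) strip"
    unfolding canalytic_on_def
  proof
    fix z assume z: "z \<in> strip"
    obtain v where v: "has_cderiv J F v z" using F z unfolding calderon_base_def canalytic_on_def by blast
    obtain w where w: "has_cderiv J G w z" using G z unfolding calderon_base_def canalytic_on_def by blast
    have "((\<lambda>z. F z + G z) has_derivative (\<lambda>h. cscale J h v + cscale J h w)) (at z)"
      using v w unfolding has_cderiv_def by (rule has_derivative_add)
    thus "\<exists>u. has_cderiv J (\<lambda>z. F z + G z) u z"
      unfolding has_cderiv_def using cscale_add[OF lJ] by (intro exI[of _ "v + w"]) simp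
  qed
  ultimately show ?thesis using F G unfolding calderon_base_def by auto
qed

lemma cb_comp:
  assumes g: "operator_on J g" and F: "calderon_base J F"
  shows "calderon_base J (\<lambda>z. g (F z))"
proof -
  have bl: "bounded_linear g" using g unfolding operator_on_def by blast
  have "bounded ((\<lambda>z. g (F z)) ` cstrip)"
    using bounded_linear_image[OF _ bl, of "F ` cstrip"] F unfolding calderon_base_def
    by (simp add: image_image)
  moreover have "continuous_on cstrip (\<lambda>z. g (F z))"
    using F unfolding calderon_base_def
    by (intro continuous_on_compose2[OF bounded_linear.continuous_on[OF bl continuous_on_id]]) auto
  moreover have "canalytic_on J (\<lambda>z. g (F z)) strip"
    unfolding canalytic_on_def
  proof
    fix z assume z: "z \<in> strip"
    obtain v where v: "has_cderiv J F v z" using F z unfolding calderon_base_def canalytic_on_def by blast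
    have "((\<lambda>z. g (F z)) has_derivative (\<lambda>h. g (cscale J h v))) (at z)"
      using v unfolding has_cderiv_def by (rule bounded_linear.has_derivative[OF bl])
    thus "\<exists>u. has_cderiv J (\<lambda>z. g (F z)) u z"
      unfolding has_cderiv_def using op_cscale[OF g] by (intro exI[of _ "g v"]) simp
  qed
  moreover have "g 0 = 0" using bl by (rule linear_0[OF bounded_linear.linear])
  ultimately show ?thesis using F unfolding calderon_base_def by auto
qed

lemma cderiv_comp:
  assumes g: "operator_on J g" and v: "has_cderiv J F v z"
  shows "has_cderiv J (\<lambda>z. g (F z)) (g v) z"
proof -
  have bl: "bounded_linear g" using g unfolding operator_on_def by blast
  have "((\<lambda>z. g (F z)) has_derivative (\<lambda>h. g (cscale J h v))) (at z)"
    using v unfolding has_cderiv_def by (rule bounded_linear.has_derivative[OF bl])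
  thus ?thesis unfolding has_cderiv_def using op_cscale[OF g] by simp
qed

lemma cderiv_unique:
  assumes "has_cderiv J F v z" "has_cderiv J F w z"
  shows "v = w"
proof -
  have "(\<lambda>h. cscale J h v) = (\<lambda>h. cscale J h w)"
    using assms unfolding has_cderiv_def by (rule has_derivative_unique)
  hence "cscale J 1 v = cscale J 1 w" by metis
  thus ?thesis by (simp add: cscale_def)
qed

lemma AE_lborel_not_False: "\<not> (AE (t::real) in lborel. False)"
  by (simp add: eventually_False ae_filter_eq_bot_iff)

lemma ess_lower:
  assumes n: "complex_norm_on J X n" and M: "bdry_ess_bdd X n f M"
  shows "0 \<le> M"
proof (rule ccontr)
  assume nm: "\<not> 0 \<le> M"
  have M': "AE t in lborel. f t \<in> X \<and> n (f t) \<le> M" using M unfolding bdry_ess_bdd_def .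
  have "AE (t::real) in lborel. False"
    using M' proof (rule eventually_mono)
    fix t assume "f t \<in> X \<and> n (f t) \<le> M"
    thus False using nm cn_nn[OF n, of "f t"] by linarith
  qed
  thus False using AE_lborel_not_False by blast
qed

lemma ess_bdd_below: "complex_norm_on J X n \<Longrightarrow> bdd_below {M. bdry_ess_bdd X n f M}"
  by (rule bdd_belowI[of _ 0]) (simp add: ess_lower)

lemma ess_nn:
  assumes n: "complex_norm_on J X n" and M: "bdry_ess_bdd X n f M"
  shows "0 \<le> ess_bdry_norm X n f"
  unfolding ess_bdry_norm_def using M by (auto intro!: cInf_greatest dest: ess_lower[OF n])

lemma ess_le: "complex_norm_on J X n \<Longrightarrow> bdry_ess_bdd X n f M \<Longrightarrow> ess_bdry_norm X n f \<le> M"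
  unfolding ess_bdry_norm_def by (rule cInf_lower) (auto intro: ess_bdd_below)

lemma ess_add:
  assumes s: "complex_subspace J X" and n: "complex_norm_on J X n"
    and f: "bdry_ess_bdd X n f M1" and g: "bdry_ess_bdd X n g M2"
  shows "bdry_ess_bdd X n (\<lambda>t. f t + g t) (M1 + M2)"
proof -
  have "AE t in lborel. (f t \<in> X \<and> n (f t) \<le> M1) \<and> (g t \<in> X \<and> n (g t) \<le> M2)"
    using f g unfolding bdry_ess_bdd_def by (rule AE_conjI)
  thus ?thesis unfolding bdry_ess_bdd_def
  proof (rule eventually_mono)
    fix t assume h: "(f t \<in> X \<and> n (f t) \<le> M1) \<and> (g t \<in> X \<and> n (g t) \<le> M2)"
    have "n (f t + g t) \<le> n (f t) + n (g t)" using cn_add[OF n] h by blast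
    thus "f t + g t \<in> X \<and> n (f t + g t) \<le> M1 + M2" using h csub_add[OF s] by force
  qed
qed

lemma ess_scale:
  assumes s: "complex_subspace J X" and n: "complex_norm_on J X n"
    and f: "bdry_ess_bdd X n f M"
  shows "bdry_ess_bdd X n (\<lambda>t. c *\<^sub>R f t) (\<bar>c\<bar> * M)"
  using f unfolding bdry_ess_bdd_def
proof (rule eventually_mono)
  fix t assume h: "f t \<in> X \<and> n (f t) \<le> M"
  have "n (c *\<^sub>R f t) = \<bar>c\<bar> * n (f t)" using cn_scale[OF n] h by blast
  also have "\<dots> \<le> \<bar>c\<bar> * M" using h by (simp add: mult_left_mono)
  finally show "c *\<^sub>R f t \<in> X \<and> n (c *\<^sub>R f t) \<le> \<bar>c\<bar> * M" using h csub_scale[OF s] by blast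
qed

lemma ess_comp:
  assumes g: "\<forall>x\<in>X. g x \<in> X \<and> n (g x) \<le> n x"
    and f: "bdry_ess_bdd X n f M"
  shows "bdry_ess_bdd X n (\<lambda>t. g (f t)) M"
  using f unfolding bdry_ess_bdd_def
proof (rule eventually_mono)
  fix t assume h: "f t \<in> X \<and> n (f t) \<le> M"
  thus "g (f t) \<in> X \<and> n (g (f t)) \<le> M" using g by force
qed

lemma essn_add:
  assumes s: "complex_subspace J X" and n: "complex_norm_on J X n"
    and f: "bdry_ess_bdd X n f M1" and g: "bdry_ess_bdd X n g M2"
  shows "ess_bdry_norm X n (\<lambda>t. f t + g t) \<le> ess_bdry_norm X n f + ess_bdry_norm X n g"
proof -
  have A: "ess_bdry_norm X n (\<lambda>t. f t + g t) \<le> 1 * ess_bdry_norm X n g + a"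
    if a: "bdry_ess_bdd X n f a" for a
    unfolding ess_bdry_norm_def[of X n g]
  proof (rule inf_bound_aux)
    show "{M. bdry_ess_bdd X n g M} \<noteq> {}" using g by blast
    fix M assume "M \<in> {M. bdry_ess_bdd X n g M}"
    hence "bdry_ess_bdd X n g M" by simp
    from ess_le[OF n ess_add[OF s n a this]]
    show "ess_bdry_norm X n (\<lambda>t. f t + g t) \<le> 1 * M + a" by simp
  qed simp
  have "ess_bdry_norm X n (\<lambda>t. f t + g t) \<le> 1 * ess_bdry_norm X n f + ess_bdry_norm X n g"
    unfolding ess_bdry_norm_def[of X n f]
  proof (rule inf_bound_aux)
    show "{M. bdry_ess_bdd X n f M} \<noteq> {}" using f by blast
    fix M assume "M \<in> {M. bdry_ess_bdd X n f M}"
    hence "bdry_ess_bdd X n f M" by simp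
    from A[OF this]
    show "ess_bdry_norm X n (\<lambda>t. f t + g t) \<le> 1 * M + ess_bdry_norm X n g" by simp
  qed simp
  thus ?thesis by simp
qed

lemma essn_scale:
  assumes s: "complex_subspace J X" and n: "complex_norm_on J X n"
    and f: "bdry_ess_bdd X n f M"
  shows "ess_bdry_norm X n (\<lambda>t. c *\<^sub>R f t) \<le> \<bar>c\<bar> * ess_bdry_norm X n f"
proof -
  have "ess_bdry_norm X n (\<lambda>t. c *\<^sub>R f t) \<le> \<bar>c\<bar> * ess_bdry_norm X n f + 0"
    unfolding ess_bdry_norm_def[of X n f]
  proof (rule inf_bound_aux)
    show "{M. bdry_ess_bdd X n f M} \<noteq> {}" using f by blast
    fix M assume "M \<in> {M. bdry_ess_bdd X n f M}"
    hence "bdry_ess_bdd X n f M" by simp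
    from ess_le[OF n ess_scale[OF s n this]]
    show "ess_bdry_norm X n (\<lambda>t. c *\<^sub>R f t) \<le> \<bar>c\<bar> * M + 0" by simp
  qed simp
  thus ?thesis by simp
qed

lemma essn_comp:
  assumes n: "complex_norm_on J X n" and g: "\<forall>x\<in>X. g x \<in> X \<and> n (g x) \<le> n x"
    and f: "bdry_ess_bdd X n f M"
  shows "ess_bdry_norm X n (\<lambda>t. g (f t)) \<le> ess_bdry_norm X n f"
proof -
  have "ess_bdry_norm X n (\<lambda>t. g (f t)) \<le> 1 * ess_bdry_norm X n f + 0"
    unfolding ess_bdry_norm_def[of X n f]
  proof (rule inf_bound_aux)
    show "{M. bdry_ess_bdd X n f M} \<noteq> {}" using f by blast
    fix M assume "M \<in> {M. bdry_ess_bdd X n f M}"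
    hence "bdry_ess_bdd X n f M" by simp
    from ess_le[OF n ess_comp[OF g this]]
    show "ess_bdry_norm X n (\<lambda>t. g (f t)) \<le> 1 * M + 0" by simp
  qed simp
  thus ?thesis by simp
qed



lemma rip_parts:
  assumes "regular_interpolation_pair J X0 n0 X1 n1"
  shows "complex_structure J" "complex_subspace J X0" "complex_subspace J X1"
    "complex_norm_on J X0 n0" "complex_norm_on J X1 n1"
    "\<forall>x. \<exists>a\<in>X0. \<exists>b\<in>X1. a + b = x"
    "\<forall>x. norm x = Inf {n0 a + n1 b | a b. a \<in> X0 \<and> b \<in> X1 \<and> a + b = x}"
  using assms unfolding regular_interpolation_pair_def by simp_all

lemma ce_lin:
  assumes r: "regular_interpolation_pair J X0 n0 X1 n1"
    and F: "F \<in> calderon_ess J X0 n0 X1 n1" and G: "G \<in> calderon_ess J X0 n0 X1 n1"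
  shows "(\<lambda>z. F z + c *\<^sub>R G z) \<in> calderon_ess J X0 n0 X1 n1"
proof -
  note rp = rip_parts[OF r]
  have cbF: "calderon_base J F" and cbG: "calderon_base J G" using F G unfolding calderon_ess_def by auto
  have cb: "calderon_base J (\<lambda>z. F z + c *\<^sub>R G z)"
    using cb_add[OF rp(1) cbF cb_comp[OF scale_operator[OF rp(1)] cbG]] .
  obtain A0 where A0: "bdry_ess_bdd X0 n0 (\<lambda>t. F (Complex 0 t)) A0" using F unfolding calderon_ess_def by auto
  obtain B0 where B0: "bdry_ess_bdd X0 n0 (\<lambda>t. G (Complex 0 t)) B0" using G unfolding calderon_ess_def by auto
  obtain A1 where A1: "bdry_ess_bdd X1 n1 (\<lambda>t. F (Complex 1 t)) A1" using F unfolding calderon_ess_def by auto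
  obtain B1 where B1: "bdry_ess_bdd X1 n1 (\<lambda>t. G (Complex 1 t)) B1" using G unfolding calderon_ess_def by auto
  have e0: "bdry_ess_bdd X0 n0 (\<lambda>t. F (Complex 0 t) + c *\<^sub>R G (Complex 0 t)) (A0 + \<bar>c\<bar> * B0)"
    using ess_add[OF rp(2) rp(4) A0 ess_scale[OF rp(2) rp(4) B0]] by simp
  have e1: "bdry_ess_bdd X1 n1 (\<lambda>t. F (Complex 1 t) + c *\<^sub>R G (Complex 1 t)) (A1 + \<bar>c\<bar> * B1)"
    using ess_add[OF rp(3) rp(5) A1 ess_scale[OF rp(3) rp(5) B1]] by simp
  show ?thesis unfolding calderon_ess_def using cb e0 e1 by blast
qed

lemma ce_comp:
  assumes r: "regular_interpolation_pair J X0 n0 X1 n1" and g: "operator_on J g"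
    and g0: "\<forall>x\<in>X0. g x \<in> X0 \<and> n0 (g x) \<le> n0 x"
    and g1: "\<forall>x\<in>X1. g x \<in> X1 \<and> n1 (g x) \<le> n1 x"
    and F: "F \<in> calderon_ess J X0 n0 X1 n1"
  shows "(\<lambda>z. g (F z)) \<in> calderon_ess J X0 n0 X1 n1"
    "calderon_ess_norm X0 n0 X1 n1 (\<lambda>z. g (F z)) \<le> calderon_ess_norm X0 n0 X1 n1 F"
proof -
  note rp = rip_parts[OF r]
  have cbF: "calderon_base J F" using F unfolding calderon_ess_def by auto
  obtain A0 where A0: "bdry_ess_bdd X0 n0 (\<lambda>t. F (Complex 0 t)) A0" using F unfolding calderon_ess_def by auto
  obtain A1 where A1: "bdry_ess_bdd X1 n1 (\<lambda>t. F (Complex 1 t)) A1" using F unfolding calderon_ess_def by auto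
  show "(\<lambda>z. g (F z)) \<in> calderon_ess J X0 n0 X1 n1"
    unfolding calderon_ess_def using cb_comp[OF g cbF] ess_comp[OF g0 A0] ess_comp[OF g1 A1] by auto
  show "calderon_ess_norm X0 n0 X1 n1 (\<lambda>z. g (F z)) \<le> calderon_ess_norm X0 n0 X1 n1 F"
    unfolding calderon_ess_norm_def
    using essn_comp[OF rp(4) g0 A0] essn_comp[OF rp(5) g1 A1] by (auto simp: max_def)
qed

lemma ce_norm_props:
  assumes r: "regular_interpolation_pair J X0 n0 X1 n1"
    and F: "F \<in> calderon_ess J X0 n0 X1 n1" and G: "G \<in> calderon_ess J X0 n0 X1 n1"
  shows "calderon_ess_norm X0 n0 X1 n1 (\<lambda>z. F z + G z)
           \<le> calderon_ess_norm X0 n0 X1 n1 F + calderon_ess_norm X0 n0 X1 n1 G"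
    "calderon_ess_norm X0 n0 X1 n1 (\<lambda>z. c *\<^sub>R F z) \<le> \<bar>c\<bar> * calderon_ess_norm X0 n0 X1 n1 F"
    "0 \<le> calderon_ess_norm X0 n0 X1 n1 F"
proof -
  note rp = rip_parts[OF r]
  obtain A0 where A0: "bdry_ess_bdd X0 n0 (\<lambda>t. F (Complex 0 t)) A0" using F unfolding calderon_ess_def by auto
  obtain B0 where B0: "bdry_ess_bdd X0 n0 (\<lambda>t. G (Complex 0 t)) B0" using G unfolding calderon_ess_def by auto
  obtain A1 where A1: "bdry_ess_bdd X1 n1 (\<lambda>t. F (Complex 1 t)) A1" using F unfolding calderon_ess_def by auto
  obtain B1 where B1: "bdry_ess_bdd X1 n1 (\<lambda>t. G (Complex 1 t)) B1" using G unfolding calderon_ess_def by auto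
  have a0: "ess_bdry_norm X0 n0 (\<lambda>t. F (Complex 0 t) + G (Complex 0 t))
      \<le> ess_bdry_norm X0 n0 (\<lambda>t. F (Complex 0 t)) + ess_bdry_norm X0 n0 (\<lambda>t. G (Complex 0 t))"
    using essn_add[OF rp(2) rp(4) A0 B0] by simp
  have a1: "ess_bdry_norm X1 n1 (\<lambda>t. F (Complex 1 t) + G (Complex 1 t))
      \<le> ess_bdry_norm X1 n1 (\<lambda>t. F (Complex 1 t)) + ess_bdry_norm X1 n1 (\<lambda>t. G (Complex 1 t))"
    using essn_add[OF rp(3) rp(5) A1 B1] by simp
  show "calderon_ess_norm X0 n0 X1 n1 (\<lambda>z. F z + G z)
           \<le> calderon_ess_norm X0 n0 X1 n1 F + calderon_ess_norm X0 n0 X1 n1 G"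
    unfolding calderon_ess_norm_def using a0 a1 by (auto simp: max_def)
  have s0: "ess_bdry_norm X0 n0 (\<lambda>t. c *\<^sub>R F (Complex 0 t)) \<le> \<bar>c\<bar> * ess_bdry_norm X0 n0 (\<lambda>t. F (Complex 0 t))"
    using essn_scale[OF rp(2) rp(4) A0] by simp
  have s1: "ess_bdry_norm X1 n1 (\<lambda>t. c *\<^sub>R F (Complex 1 t)) \<le> \<bar>c\<bar> * ess_bdry_norm X1 n1 (\<lambda>t. F (Complex 1 t))"
    using essn_scale[OF rp(3) rp(5) A1] by simp
  show "calderon_ess_norm X0 n0 X1 n1 (\<lambda>z. c *\<^sub>R F z) \<le> \<bar>c\<bar> * calderon_ess_norm X0 n0 X1 n1 F"
    unfolding calderon_ess_norm_def using s0 s1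
    by (auto simp: max_def intro: order.trans[OF _ mult_left_mono])
  show "0 \<le> calderon_ess_norm X0 n0 X1 n1 F"
    unfolding calderon_ess_norm_def using ess_nn[OF rp(4) A0] by (simp add: le_max_iff_disj)
qed



lemma minimal_fn_is:
  assumes opt: "optimal_pair J X0 n0 X1 n1" and th: "0 < \<theta>" "\<theta> < 1"
    and x: "x \<in> interp_space J X0 n0 X1 n1 \<theta>"
  shows "is_minimal_fn J X0 n0 X1 n1 \<theta> x (minimal_fn J X0 n0 X1 n1 \<theta> x)"
    "\<And>F. is_minimal_fn J X0 n0 X1 n1 \<theta> x F \<Longrightarrow> F = minimal_fn J X0 n0 X1 n1 \<theta> x"
proof -
  have ex: "\<exists>!F. is_minimal_fn J X0 n0 X1 n1 \<theta> x F"
    using opt th x unfolding optimal_pair_def by blast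
  show "is_minimal_fn J X0 n0 X1 n1 \<theta> x (minimal_fn J X0 n0 X1 n1 \<theta> x)"
    unfolding minimal_fn_def by (rule theI'[OF ex])
  fix F assume "is_minimal_fn J X0 n0 X1 n1 \<theta> x F"
  thus "F = minimal_fn J X0 n0 X1 n1 \<theta> x"
    unfolding minimal_fn_def using ex by (metis the_equality)
qed

lemma part1:
  assumes opt: "optimal_pair J X0 n0 X1 n1" and th: "0 < \<theta>" "\<theta> < 1"
    and g: "operator_on J g"
    and g0: "\<forall>x\<in>X0. g x \<in> X0 \<and> n0 (g x) \<le> n0 x"
    and g1: "\<forall>x\<in>X1. g x \<in> X1 \<and> n1 (g x) \<le> n1 x"
    and x: "x \<in> interp_space J X0 n0 X1 n1 \<theta>"
    and gx: "g x \<in> interp_space J X0 n0 X1 n1 \<theta>"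
    and gn: "interp_norm J X0 n0 X1 n1 \<theta> (g x) = interp_norm J X0 n0 X1 n1 \<theta> x"
  shows "g (canonical_differential J X0 n0 X1 n1 \<theta> x)
           = canonical_differential J X0 n0 X1 n1 \<theta> (g x)"
proof -
  have r: "regular_interpolation_pair J X0 n0 X1 n1" using opt unfolding optimal_pair_def by blast
  define C where "C = calderon_ess J X0 n0 X1 n1"
  define N where "N = calderon_ess_norm X0 n0 X1 n1"
  define F where "F = minimal_fn J X0 n0 X1 n1 \<theta> x"
  define H where "H = minimal_fn J X0 n0 X1 n1 \<theta> (g x)"
  have mF: "is_minimal_fn J X0 n0 X1 n1 \<theta> x F" unfolding F_def by (rule minimal_fn_is(1)[OF opt th x])
  have mH: "is_minimal_fn J X0 n0 X1 n1 \<theta> (g x) H" unfolding H_def by (rule minimal_fn_is(1)[OF opt th gx])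
  have FC: "F \<in> C" "F (complex_of_real \<theta>) = x" "N F = interp_norm J X0 n0 X1 n1 \<theta> x"
    using mF unfolding is_minimal_fn_def C_def N_def by auto
  have HC: "H \<in> C" "H (complex_of_real \<theta>) = g x" "N H = interp_norm J X0 n0 X1 n1 \<theta> (g x)"
    using mH unfolding is_minimal_fn_def C_def N_def by auto
  define P where "P = (\<lambda>z. g (F z))"
  have PC: "P \<in> C" "N P \<le> N F"
    using ce_comp[OF r g g0 g1 FC(1)[unfolded C_def]] unfolding P_def C_def N_def by auto
  have PH: "P = H"
  proof (rule abstract_unique[where C = C and N = N and w = "complex_of_real \<theta>" and y = "g x"])
    show "\<And>F G c. F \<in> C \<Longrightarrow> G \<in> C \<Longrightarrow> (\<lambda>z. F z + c *\<^sub>R G z) \<in> C"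
      unfolding C_def by (rule ce_lin[OF r])
    show "\<And>F c. F \<in> C \<Longrightarrow> (\<lambda>z. c *\<^sub>R F z) \<in> C"
    proof -
      fix F c assume "F \<in> C"
      hence "(\<lambda>z. F z + (c - 1) *\<^sub>R F z) \<in> C" unfolding C_def using ce_lin[OF r] by blast
      moreover have "(\<lambda>z. F z + (c - 1) *\<^sub>R F z) = (\<lambda>z. c *\<^sub>R F z)"
        by (rule ext) (simp add: algebra_simps)
      ultimately show "(\<lambda>z. c *\<^sub>R F z) \<in> C" by simp
    qed
    show "\<And>F G. F \<in> C \<Longrightarrow> G \<in> C \<Longrightarrow> N (\<lambda>z. F z + G z) \<le> N F + N G"
      unfolding C_def N_def by (rule ce_norm_props(1)[OF r])
    show "\<And>F c. F \<in> C \<Longrightarrow> N (\<lambda>z. c *\<^sub>R F z) \<le> \<bar>c\<bar> * N F"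
      unfolding C_def N_def by (rule ce_norm_props(2)[OF r _ _]) 
    show "\<And>F. F \<in> C \<Longrightarrow> 0 \<le> N F"
      unfolding C_def N_def by (rule ce_norm_props(3)[OF r _ _])
    show "H \<in> C" "P \<in> C" by (fact HC(1)) (fact PC(1))
    show "H (complex_of_real \<theta>) = g x" by (fact HC(2))
    show "P (complex_of_real \<theta>) = g x" unfolding P_def using FC(2) by simp
    show "N P \<le> N H" using PC(2) FC(3) HC(3) gn by simp
    fix Q assume "Q \<in> C" "Q (complex_of_real \<theta>) = g x" "N Q = N H"
    hence "is_minimal_fn J X0 n0 X1 n1 \<theta> (g x) Q"
      unfolding is_minimal_fn_def C_def N_def using HC(3) N_def by simp
    thus "Q = H" unfolding H_def by (rule minimal_fn_is(2)[OF opt th gx])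
  qed
  have ths: "complex_of_real \<theta> \<in> strip" unfolding strip_def using th by simp
  obtain v where v: "has_cderiv J F v (complex_of_real \<theta>)"
    using FC(1) ths unfolding C_def calderon_ess_def calderon_base_def canalytic_on_def by blast
  have Om: "canonical_differential J X0 n0 X1 n1 \<theta> x = v"
    unfolding canonical_differential_def F_def[symmetric]
    using v cderiv_unique[OF _ v] by blast
  have vH: "has_cderiv J H (g v) (complex_of_real \<theta>)"
    using cderiv_comp[OF g v] PH unfolding P_def by simp
  have "canonical_differential J X0 n0 X1 n1 \<theta> (g x) = g v"
    unfolding canonical_differential_def H_def[symmetric]
    using vH cderiv_unique[OF _ vH] by blast
  thus ?thesis using Om by simp
qed


lemma cal_comp:
  assumes r: "regular_interpolation_pair J X0 n0 X1 n1" and g: "operator_on J g"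
    and g0: "\<forall>x\<in>X0. g x \<in> X0 \<and> n0 (g x) = n0 x"
    and g1: "\<forall>x\<in>X1. g x \<in> X1 \<and> n1 (g x) = n1 x"
    and F: "F \<in> calderon J X0 n0 X1 n1"
  shows "(\<lambda>z. g (F z)) \<in> calderon J X0 n0 X1 n1"
    "calderon_norm n0 n1 (\<lambda>z. g (F z)) = calderon_norm n0 n1 F"
proof -
  note rp = rip_parts[OF r]
  have lg: "linear g" using g unfolding operator_on_def by (simp add: bounded_linear.linear)
  have cbF: "calderon_base J F" using F unfolding calderon_def by auto
  have bd: "bdry_cont_bdd X (n::'a \<Rightarrow> real) (\<lambda>t. g (f t))"
    if s: "complex_subspace J X" and gi: "\<forall>x\<in>X. g x \<in> X \<and> n (g x) = n x"
      and f: "bdry_cont_bdd X n f" for X n f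
  proof -
    have fX: "\<forall>t. f t \<in> X" using f unfolding bdry_cont_bdd_def by blast
    have "n (g (f s) - g (f t)) = n (f s - f t)" for s t
    proof -
      have "g (f s) - g (f t) = g (f s - f t)" by (simp add: linear_diff[OF lg])
      thus ?thesis using gi csub_diff[OF s, of "f s" "f t"] fX by simp
    qed
    thus ?thesis using f gi fX unfolding bdry_cont_bdd_def by simp
  qed
  have b0: "bdry_cont_bdd X0 n0 (\<lambda>t. F (Complex 0 t))" and b1: "bdry_cont_bdd X1 n1 (\<lambda>t. F (Complex 1 t))"
    using F unfolding calderon_def by auto
  show "(\<lambda>z. g (F z)) \<in> calderon J X0 n0 X1 n1"
    unfolding calderon_def using cb_comp[OF g cbF] bd[OF rp(2) g0 b0] bd[OF rp(3) g1 b1] by simp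
  have e0: "(\<lambda>t. n0 (g (F (Complex 0 t)))) = (\<lambda>t. n0 (F (Complex 0 t)))"
    using b0 g0 unfolding bdry_cont_bdd_def by auto
  have e1: "(\<lambda>t. n1 (g (F (Complex 1 t)))) = (\<lambda>t. n1 (F (Complex 1 t)))"
    using b1 g1 unfolding bdry_cont_bdd_def by auto
  show "calderon_norm n0 n1 (\<lambda>z. g (F z)) = calderon_norm n0 n1 F"
    unfolding calderon_norm_def e0 e1 by (rule refl)
qed

lemma inv_operator:
  assumes r: "regular_interpolation_pair J X0 n0 X1 n1" and g: "operator_on J g" and b: "bij g"
    and X0: "g ` X0 = X0" and n0: "\<forall>x\<in>X0. n0 (g x) = n0 x"
    and X1: "g ` X1 = X1" and n1: "\<forall>x\<in>X1. n1 (g x) = n1 x"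
  shows "operator_on J (inv g)"
    "\<forall>x\<in>X0. inv g x \<in> X0 \<and> n0 (inv g x) = n0 x"
    "\<forall>x\<in>X1. inv g x \<in> X1 \<and> n1 (inv g x) = n1 x"
proof -
  note rp = rip_parts[OF r]
  have lg: "linear g" using g unfolding operator_on_def by (simp add: bounded_linear.linear)
  have gJ: "g (J x) = J (g x)" for x using g unfolding operator_on_def by blast
  have gi: "g (inv g y) = y" for y using b by (simp add: bij_is_surj surj_f_inv_f)
  have ig: "inv g (g y) = y" for y using b by (simp add: bij_is_inj)
  have inj: "g a = g c \<Longrightarrow> a = c" for a c using ig by metis
  have add: "inv g (x + y) = inv g x + inv g y" for x y
    by (rule inj) (simp add: gi linear_add[OF lg])
  have sc: "inv g (c *\<^sub>R x) = c *\<^sub>R inv g x" for c x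
    by (rule inj) (simp add: gi linear_scale[OF lg])
  have iJ: "inv g (J x) = J (inv g x)" for x
    by (rule inj) (simp add: gi gJ)
  have inX: "inv g x \<in> X \<and> n (inv g x) = n x"
    if XX: "g ` X = X" and nn: "\<forall>x\<in>X. n (g x) = n x" and x: "x \<in> X" for X n x
  proof -
    obtain a where a: "a \<in> X" "x = g a" using x XX by blast
    thus ?thesis using ig nn by simp
  qed
  show i0: "\<forall>x\<in>X0. inv g x \<in> X0 \<and> n0 (inv g x) = n0 x" using inX[OF X0 n0] by blast
  show i1: "\<forall>x\<in>X1. inv g x \<in> X1 \<and> n1 (inv g x) = n1 x" using inX[OF X1 n1] by blast
  have nb: "norm (inv g y) \<le> norm y" for y
  proof -
    have "norm (inv g y) \<le> Inf {n0 a + n1 b | a b. a \<in> X0 \<and> b \<in> X1 \<and> a + b = y}"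
    proof (rule cInf_greatest)
      show "{n0 a + n1 b | a b. a \<in> X0 \<and> b \<in> X1 \<and> a + b = y} \<noteq> {}" using rp(6) by blast
      fix m assume "m \<in> {n0 a + n1 b | a b. a \<in> X0 \<and> b \<in> X1 \<and> a + b = y}"
      then obtain a b where ab: "a \<in> X0" "b \<in> X1" "a + b = y" "m = n0 a + n1 b" by blast
      have mem: "m \<in> {n0 a + n1 b | a b. a \<in> X0 \<and> b \<in> X1 \<and> a + b = inv g y}"
        using ab i0 i1 add[of a b] by (intro CollectI exI[of _ "inv g a"] exI[of _ "inv g b"]) auto
      have bb: "bdd_below {n0 a + n1 b | a b. a \<in> X0 \<and> b \<in> X1 \<and> a + b = inv g y}"
        by (rule bdd_belowI[of _ 0]) (auto intro: add_nonneg_nonneg cn_nn[OF rp(4)] cn_nn[OF rp(5)])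
      show "norm (inv g y) \<le> m" unfolding rp(7)[rule_format, of "inv g y"] by (rule cInf_lower[OF mem bb])
    qed
    thus ?thesis using rp(7) by simp
  qed
  have "bounded_linear (inv g)"
    by (rule bounded_linear_intro[of _ 1]) (use add sc nb in auto)
  thus "operator_on J (inv g)" unfolding operator_on_def using iJ by simp
qed

lemma interp_iso:
  assumes r: "regular_interpolation_pair J X0 n0 X1 n1" and g: "operator_on J g" and b: "bij g"
    and X0: "g ` X0 = X0" and n0: "\<forall>x\<in>X0. n0 (g x) = n0 x"
    and X1: "g ` X1 = X1" and n1: "\<forall>x\<in>X1. n1 (g x) = n1 x"
    and x: "x \<in> interp_space J X0 n0 X1 n1 \<theta>"
  shows "g x \<in> interp_space J X0 n0 X1 n1 \<theta>"
    "interp_norm J X0 n0 X1 n1 \<theta> (g x) = interp_norm J X0 n0 X1 n1 \<theta> x"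
proof -
  have g0: "\<forall>x\<in>X0. g x \<in> X0 \<and> n0 (g x) = n0 x" using X0 n0 by blast
  have g1: "\<forall>x\<in>X1. g x \<in> X1 \<and> n1 (g x) = n1 x" using X1 n1 by blast
  note iv = inv_operator[OF r g b X0 n0 X1 n1]
  have ig: "inv g (g y) = y" for y using b by (simp add: bij_is_inj)
  obtain F where F: "F \<in> calderon J X0 n0 X1 n1" "x = F (complex_of_real \<theta>)"
    using x unfolding interp_space_def by blast
  show "g x \<in> interp_space J X0 n0 X1 n1 \<theta>"
    unfolding interp_space_def mem_Collect_eq using cal_comp(1)[OF r g g0 g1 F(1)] F(2)
    by (intro exI[of _ "\<lambda>z. g (F z)"]) simp
  have "{calderon_norm n0 n1 G | G. G \<in> calderon J X0 n0 X1 n1 \<and> G (complex_of_real \<theta>) = g x}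
      = {calderon_norm n0 n1 G | G. G \<in> calderon J X0 n0 X1 n1 \<and> G (complex_of_real \<theta>) = x}"
  proof (intro equalityI subsetI)
    fix m assume "m \<in> {calderon_norm n0 n1 G | G. G \<in> calderon J X0 n0 X1 n1 \<and> G (complex_of_real \<theta>) = g x}"
    then obtain G where G: "G \<in> calderon J X0 n0 X1 n1" "G (complex_of_real \<theta>) = g x" "m = calderon_norm n0 n1 G"
      by blast
    show "m \<in> {calderon_norm n0 n1 G | G. G \<in> calderon J X0 n0 X1 n1 \<and> G (complex_of_real \<theta>) = x}"
      using cal_comp[OF r iv(1) iv(2) iv(3) G(1)] G(2,3) ig
      by (intro CollectI exI[of _ "\<lambda>z. inv g (G z)"]) auto
  next
    fix m assume "m \<in> {calderon_norm n0 n1 G | G. G \<in> calderon J X0 n0 X1 n1 \<and> G (complex_of_real \<theta>) = x}"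
    then obtain G where G: "G \<in> calderon J X0 n0 X1 n1" "G (complex_of_real \<theta>) = x" "m = calderon_norm n0 n1 G"
      by blast
    show "m \<in> {calderon_norm n0 n1 G | G. G \<in> calderon J X0 n0 X1 n1 \<and> G (complex_of_real \<theta>) = g x}"
      using cal_comp[OF r g g0 g1 G(1)] G(2,3)
      by (intro CollectI exI[of _ "\<lambda>z. g (G z)"]) auto
  qed
  thus "interp_norm J X0 n0 X1 n1 \<theta> (g x) = interp_norm J X0 n0 X1 n1 \<theta> x"
    unfolding interp_norm_def by simp
qed

theorem mainTheorem7:
  fixes J :: "'a::real_normed_vector \<Rightarrow> 'a"
    and X0 X1 :: "'a set" and n0 n1 :: "'a \<Rightarrow> real" and \<theta> :: real
  assumes opt: "optimal_pair J X0 n0 X1 n1"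
    and th: "0 < \<theta>" "\<theta> < 1"
  shows "(\<forall>g. operator_on J g
            \<and> (\<forall>x\<in>X0. g x \<in> X0 \<and> n0 (g x) \<le> n0 x)
            \<and> (\<forall>x\<in>X1. g x \<in> X1 \<and> n1 (g x) \<le> n1 x)
            \<and> (\<forall>x\<in>interp_space J X0 n0 X1 n1 \<theta>. g x \<in> interp_space J X0 n0 X1 n1 \<theta>
                  \<and> interp_norm J X0 n0 X1 n1 \<theta> (g x) = interp_norm J X0 n0 X1 n1 \<theta> x)
          \<longrightarrow> (\<forall>x\<in>interp_space J X0 n0 X1 n1 \<theta>.
                 g (canonical_differential J X0 n0 X1 n1 \<theta> x)
                   = canonical_differential J X0 n0 X1 n1 \<theta> (g x)))
       \<and> (\<forall>g. operator_on J g \<and> bij g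
            \<and> g ` X0 = X0 \<and> (\<forall>x\<in>X0. n0 (g x) = n0 x)
            \<and> g ` X1 = X1 \<and> (\<forall>x\<in>X1. n1 (g x) = n1 x)
          \<longrightarrow> (\<forall>x\<in>interp_space J X0 n0 X1 n1 \<theta>.
                 g (canonical_differential J X0 n0 X1 n1 \<theta> x)
                   = canonical_differential J X0 n0 X1 n1 \<theta> (g x)))"
  proof (intro conjI allI impI)
  have r: "regular_interpolation_pair J X0 n0 X1 n1" using opt unfolding optimal_pair_def by blast
  fix g
  assume h: "operator_on J g
            \<and> (\<forall>x\<in>X0. g x \<in> X0 \<and> n0 (g x) \<le> n0 x)
            \<and> (\<forall>x\<in>X1. g x \<in> X1 \<and> n1 (g x) \<le> n1 x)
            \<and> (\<forall>x\<in>interp_space J X0 n0 X1 n1 \<theta>. g x \<in> interp_space J X0 n0 X1 n1 \<theta>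
                  \<and> interp_norm J X0 n0 X1 n1 \<theta> (g x) = interp_norm J X0 n0 X1 n1 \<theta> x)"
  show "\<forall>x\<in>interp_space J X0 n0 X1 n1 \<theta>.
                 g (canonical_differential J X0 n0 X1 n1 \<theta> x)
                   = canonical_differential J X0 n0 X1 n1 \<theta> (g x)"
  proof
    fix x assume x: "x \<in> interp_space J X0 n0 X1 n1 \<theta>"
    show "g (canonical_differential J X0 n0 X1 n1 \<theta> x)
                   = canonical_differential J X0 n0 X1 n1 \<theta> (g x)"
      using h x by (intro part1[OF opt th]) auto
  qed
next
  have r: "regular_interpolation_pair J X0 n0 X1 n1" using opt unfolding optimal_pair_def by blast
  fix g
  assume h: "operator_on J g \<and> bij g
            \<and> g ` X0 = X0 \<and> (\<forall>x\<in>X0. n0 (g x) = n0 x)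
            \<and> g ` X1 = X1 \<and> (\<forall>x\<in>X1. n1 (g x) = n1 x)"
  hence g: "operator_on J g" "bij g" "g ` X0 = X0" "\<forall>x\<in>X0. n0 (g x) = n0 x"
    "g ` X1 = X1" "\<forall>x\<in>X1. n1 (g x) = n1 x" by auto
  show "\<forall>x\<in>interp_space J X0 n0 X1 n1 \<theta>.
                 g (canonical_differential J X0 n0 X1 n1 \<theta> x)
                   = canonical_differential J X0 n0 X1 n1 \<theta> (g x)"
  proof
    fix x assume x: "x \<in> interp_space J X0 n0 X1 n1 \<theta>"
    have g0: "\<forall>x\<in>X0. g x \<in> X0 \<and> n0 (g x) \<le> n0 x" using g(3,4) by auto
    have g1: "\<forall>x\<in>X1. g x \<in> X1 \<and> n1 (g x) \<le> n1 x" using g(5,6) by auto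
    note ii = interp_iso[OF r g x]
    show "g (canonical_differential J X0 n0 X1 n1 \<theta> x)
                   = canonical_differential J X0 n0 X1 n1 \<theta> (g x)"
      by (rule part1[OF opt th g(1) g0 g1 x ii(1) ii(2)])
  qed
qed

end
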